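(* Let $H$ be a Hilbert space and $U_{ik}\in B(H)$, $i,k=1,\dots,n$, operators satisfying relations (R1)–(R5). Then every $U_{ik}$ is normal: $U_{ik}U_{ik}^*=U_{ik}^*U_{ik}$ for all $i,k$.
   Context: $n\ge2$, $\theta\in M_n(\mathbb R)$ skew-symmetric, $\omega_{ij}=e^{2\pi i\theta_{ij}}$. Relations, for all $i,j,k,l\in\{1,\dots,n\}$: (R1) $U_{ik}U_{jl}+\omega_{ji}U_{jk}U_{il}=\omega_{kl}U_{il}U_{jk}+\omega_{ji}\omega_{kl}U_{jl}U_{ik}$; (R2) $\sum_iU_{ik}U_{il}^*=\delta_{kl}1$; (R3) $\sum_iU_{il}^*U_{ik}=\delta_{kl}1$; (R4) $U_{jk}U_{ik}^*=0$ for $i\neq j$; (R5) $U_{ik}^*U_{jk}=0$ for $i\neq j$. *)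

theory Defs
  imports "HOL-Analysis.Analysis"
begin

text \<open>A complex Hilbert space is modelled as a carrier type 'a (an abelian group)
  together with a complex scalar multiplication sc and an inner product ip,
  linear in the first and conjugate-linear in the second argument.\<close>

definition hnorm :: "('a \<Rightarrow> 'a \<Rightarrow> complex) \<Rightarrow> 'a \<Rightarrow> real" where
  "hnorm ip x = sqrt (Re (ip x x))"

definition hilbert_space ::
  "(complex \<Rightarrow> 'a::ab_group_add \<Rightarrow> 'a) \<Rightarrow> ('a \<Rightarrow> 'a \<Rightarrow> complex) \<Rightarrow> bool" where
  "hilbert_space sc ip \<longleftrightarrow>
     vector_space sc \<and>
     (\<forall>x y z. ip (x + y) z = ip x z + ip y z) \<and>
     (\<forall>c x y. ip (sc c x) y = c * ip x y) \<and>
     (\<forall>x y. ip y x = cnj (ip x y)) \<and>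
     (\<forall>x. Im (ip x x) = 0 \<and> Re (ip x x) \<ge> 0) \<and>
     (\<forall>x. ip x x = 0 \<longrightarrow> x = 0) \<and>
     (\<forall>X :: nat \<Rightarrow> 'a.
        (\<forall>e>0. \<exists>N. \<forall>m\<ge>N. \<forall>k\<ge>N. hnorm ip (X m - X k) < e) \<longrightarrow>
        (\<exists>L. (\<lambda>k. hnorm ip (X k - L)) \<longlonglongrightarrow> 0))"

definition bounded_op ::
  "(complex \<Rightarrow> 'a::ab_group_add \<Rightarrow> 'a) \<Rightarrow> ('a \<Rightarrow> 'a \<Rightarrow> complex) \<Rightarrow> ('a \<Rightarrow> 'a) \<Rightarrow> bool" where
  "bounded_op sc ip T \<longleftrightarrow>
     Vector_Spaces.linear sc sc T \<and> (\<exists>K. \<forall>x. hnorm ip (T x) \<le> K * hnorm ip x)"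

definition is_adjoint :: "('a \<Rightarrow> 'a \<Rightarrow> complex) \<Rightarrow> ('a \<Rightarrow> 'a) \<Rightarrow> ('a \<Rightarrow> 'a) \<Rightarrow> bool" where
  "is_adjoint ip T S \<longleftrightarrow> (\<forall>x y. ip (T x) y = ip x (S y))"

end

theory Submission
  imports Defs
begin

lemma sum_single:
  assumes "finite A" "i \<in> A" "\<And>m. m \<in> A \<Longrightarrow> m \<noteq> i \<Longrightarrow> f m = (0::'b::comm_monoid_add)"
  shows "sum f A = f i"
proof -
  have "sum f A = f i + sum f (A - {i})" using assms by (simp add: sum.remove)
  also have "sum f (A - {i}) = 0" using assms by (intro sum.neutral) auto
  finally show ?thesis by simp
qed

locale qs =
  fixes sc :: "complex \<Rightarrow> 'a::ab_group_add \<Rightarrow> 'a"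
    and ip :: "'a \<Rightarrow> 'a \<Rightarrow> complex"
    and I :: "nat set"
    and U S :: "nat \<Rightarrow> nat \<Rightarrow> 'a \<Rightarrow> 'a"
    and w :: "nat \<Rightarrow> nat \<Rightarrow> complex"
  assumes VS: "vector_space sc"
    and ipadd: "\<And>x y z. ip (x + y) z = ip x z + ip y z"
    and ipsc: "\<And>c x y. ip (sc c x) y = c * ip x y"
    and ipcnj: "\<And>x y. ip y x = cnj (ip x y)"
    and ipim: "\<And>x. Im (ip x x) = 0"
    and ipre: "\<And>x. Re (ip x x) \<ge> 0"
    and ipz: "\<And>x. ip x x = 0 \<Longrightarrow> x = 0"
    and finI: "finite I"
    and adj: "\<And>i k x y. i \<in> I \<Longrightarrow> k \<in> I \<Longrightarrow> ip (U i k x) y = ip x (S i k y)"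
    and wii: "\<And>i. i \<in> I \<Longrightarrow> w i i = 1"
    and R1: "\<And>i k l x. i \<in> I \<Longrightarrow> k \<in> I \<Longrightarrow> l \<in> I \<Longrightarrow>
      U i k (U i l x) + sc (w i i) (U i k (U i l x)) =
      sc (w k l) (U i l (U i k x)) + sc (w i i * w k l) (U i l (U i k x))"
    and R2: "\<And>k l x. k \<in> I \<Longrightarrow> l \<in> I \<Longrightarrow>
      (\<Sum>i\<in>I. U i k (S i l x)) = (if k = l then x else 0)"
    and R3: "\<And>k l x. k \<in> I \<Longrightarrow> l \<in> I \<Longrightarrow>
      (\<Sum>i\<in>I. S i l (U i k x)) = (if k = l then x else 0)"
    and R4: "\<And>i j k x. i \<in> I \<Longrightarrow> j \<in> I \<Longrightarrow> k \<in> I \<Longrightarrow> i \<noteq> j \<Longrightarrow> U j k (S i k x) = 0"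
    and R5: "\<And>i j k x. i \<in> I \<Longrightarrow> j \<in> I \<Longrightarrow> k \<in> I \<Longrightarrow> i \<noteq> j \<Longrightarrow> S i k (U j k x) = 0"
begin

lemma M: "module sc" using VS by (simp add: vector_space_def module_def)

lemma ipadd2: "ip x (y + z) = ip x y + ip x z"
  by (metis ipcnj ipadd complex_cnj_add)

lemma ipzero1: "ip 0 y = 0"
  using ipadd[of 0 0 y] by simp

lemma ipzero2: "ip y 0 = 0"
  by (metis ipcnj ipzero1 complex_cnj_zero)

lemma ipdiff1: "ip (x - y) z = ip x z - ip y z"
  using ipadd[of "x - y" y z] by simp

lemma ipdiff2: "ip z (x - y) = ip z x - ip z y"
  using ipadd2[of z "x - y" y] by simp

lemma ipsum1: "ip (sum f A) y = (\<Sum>a\<in>A. ip (f a) y)"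
  by (induct A rule: infinite_finite_induct) (auto simp: ipzero1 ipadd)

lemma ipsum2: "ip y (sum f A) = (\<Sum>a\<in>A. ip y (f a))"
  by (induct A rule: infinite_finite_induct) (auto simp: ipzero2 ipadd2)

lemma ext2: assumes "\<And>x. ip x y = ip x z" shows "y = z"
proof -
  have "ip (y - z) (y - z) = 0" by (simp add: ipdiff2 assms)
  then show ?thesis using ipz by fastforce
qed

lemma ext1: assumes "\<And>x. ip y x = ip z x" shows "y = z"
  by (rule ext2) (metis assms ipcnj)

lemma half: assumes "(a::'a) + a = c + c" shows "a = c"
proof -
  have h: "\<And>a::'a. sc (1/2) (a + a) = a"
  proof -
    fix a :: 'a
    have "sc (1/2) (a + a) = sc (1/2) a + sc (1/2) a"
      using module.scale_right_distrib[OF M] by blast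
    also have "\<dots> = sc (1/2 + 1/2) a"
      using module.scale_left_distrib[OF M] by metis
    also have "\<dots> = a" using module.scale_one[OF M] by simp
    finally show "sc (1/2) (a + a) = a" .
  qed
  show ?thesis using h[of a] h[of c] assms by metis
qed

lemma scale1: "sc 1 x = x" using module.scale_one[OF M] .

lemma ip_sc2: "ip x (sc c y) = cnj c * ip x y"
  by (metis ipcnj ipsc complex_cnj_mult)


lemma Sadj: "i \<in> I \<Longrightarrow> k \<in> I \<Longrightarrow> ip (S i k y) x = ip y (U i k x)"
  by (metis adj ipcnj)

lemma adj_add1:
  assumes "\<And>x y. ip (A x) y = ip x (B y)"
  shows "A (x + y) = A x + A y"
  by (rule ext1) (simp add: assms ipadd)

lemma adj_add2:
  assumes "\<And>x y. ip (A x) y = ip x (B y)"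
  shows "B (x + y) = B x + B y"
  by (rule ext2) (simp add: assms[symmetric] ipadd2)

lemma adj_diff1:
  assumes "\<And>x y. ip (A x) y = ip x (B y)"
  shows "A (x - y) = A x - A y"
  by (rule ext1) (simp add: assms ipdiff1)

lemma adj_sum1:
  assumes "\<And>x y. ip (A x) y = ip x (B y)"
  shows "A (sum f F) = (\<Sum>a\<in>F. A (f a))"
  by (rule ext1) (simp add: assms ipsum1)

lemma adj_zero1:
  assumes "\<And>x y. ip (A x) y = ip x (B y)"
  shows "A 0 = 0"
  by (rule ext1) (simp add: assms ipzero1)

lemma U_sum: "i \<in> I \<Longrightarrow> k \<in> I \<Longrightarrow> U i k (sum f F) = (\<Sum>a\<in>F. U i k (f a))"
  by (rule adj_sum1[where B="S i k"]) (simp add: adj)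
lemma S_sum: "i \<in> I \<Longrightarrow> k \<in> I \<Longrightarrow> S i k (sum f F) = (\<Sum>a\<in>F. S i k (f a))"
  by (rule adj_sum1[where B="U i k"]) (simp add: Sadj)
lemma U_zero: "i \<in> I \<Longrightarrow> k \<in> I \<Longrightarrow> U i k 0 = 0"
  by (rule adj_zero1[where B="S i k"]) (simp add: adj)
lemma S_zero: "i \<in> I \<Longrightarrow> k \<in> I \<Longrightarrow> S i k 0 = 0"
  by (rule adj_zero1[where B="U i k"]) (simp add: Sadj)

lemma UQ: assumes "i \<in> I" "k \<in> I" shows "U i k (S i k (U i k x)) = U i k x"
proof -
  have "U i k x = U i k (\<Sum>m\<in>I. S m k (U m k x))" using R3[OF assms(2) assms(2)] by simp
  also have "\<dots> = (\<Sum>m\<in>I. U i k (S m k (U m k x)))" using U_sum assms by blast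
  also have "\<dots> = U i k (S i k (U i k x))"
    by (rule sum_single) (use finI assms R4 in auto)
  finally show ?thesis by simp
qed

lemma SP: assumes "i \<in> I" "k \<in> I" shows "S i k (U i k (S i k x)) = S i k x"
proof -
  have "S i k x = S i k (\<Sum>m\<in>I. U m k (S m k x))" using R2[OF assms(2) assms(2)] by simp
  also have "\<dots> = (\<Sum>m\<in>I. S i k (U m k (S m k x)))" using S_sum assms by blast
  also have "\<dots> = S i k (U i k (S i k x))"
    by (rule sum_single) (use finI assms R5 in auto)
  finally show ?thesis by simp
qed

lemma row3a: assumes "i \<in> I" "k \<in> I" "l \<in> I" "k \<noteq> l" shows "U i k (S i l x) = 0"
proof -
  have "0 = S i k (\<Sum>m\<in>I. U m k (S m l x))" using R2[OF assms(2,3)] assms S_zero by simp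
  also have "\<dots> = (\<Sum>m\<in>I. S i k (U m k (S m l x)))" using S_sum assms by blast
  also have "\<dots> = S i k (U i k (S i l x))"
    by (rule sum_single) (use finI assms R5 in auto)
  finally have "U i k (S i k (U i k (S i l x))) = 0" using U_zero assms by simp
  then show ?thesis using UQ assms by simp
qed

lemma row3b: assumes "i \<in> I" "k \<in> I" "l \<in> I" "k \<noteq> l" shows "S i l (U i k z) = 0"
proof -
  have "0 = (\<Sum>m\<in>I. S m l (U m k (S i k (U i k z))))" using R3[OF assms(2,3)] assms by simp
  also have "\<dots> = S i l (U i k (S i k (U i k z)))"
    by (rule sum_single) (use finI assms R4 S_zero in auto)
  finally show ?thesis using UQ assms by simp
qed

lemma rowcomm: assumes "i \<in> I" "k \<in> I" "l \<in> I"
  shows "U i k (U i l x) = sc (w k l) (U i l (U i k x))"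
proof -
  have "U i k (U i l x) + U i k (U i l x) = sc (w k l) (U i l (U i k x)) + sc (w k l) (U i l (U i k x))"
    using R1[OF assms, of x] by (simp only: wii[OF assms(1)] scale1 mult_1_left)
  then show ?thesis by (rule half)
qed

lemma row4: assumes "i \<in> I" "k \<in> I" "l \<in> I" "k \<noteq> l" shows "U i k (U i l x) = 0"
proof -
  have "ip (U i k (U i l x)) (U i k (U i l x)) = cnj (w k l) * ip (U i k (U i l x)) (U i l (U i k x))"
    by (subst (2) rowcomm[OF assms(1-3)]) (simp add: ip_sc2)
  also have "\<dots> = cnj (w k l) * ip (U i l x) (S i k (U i l (U i k x)))" using adj[OF assms(1,2)] by simp
  also have "\<dots> = 0" using row3b[OF assms(1,3,2)] assms(4) ipzero2 by simp
  finally show ?thesis using ipz by blast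
qed

lemma row4s: assumes "i \<in> I" "k \<in> I" "l \<in> I" "k \<noteq> l" shows "S i k (S i l x) = 0"
proof (rule ext2)
  fix y
  have "ip (U i l (U i k y)) x = ip (U i k y) (S i l x)" by (rule adj[OF assms(1,3)])
  also have "\<dots> = ip y (S i k (S i l x))" by (rule adj[OF assms(1,2)])
  finally have "ip y (S i k (S i l x)) = ip (U i l (U i k y)) x" by simp
  also have "\<dots> = ip y 0" using row4[OF assms(1,3,2)] assms(4) by (simp add: ipzero1 ipzero2)
  finally show "ip y (S i k (S i l x)) = ip y 0" .
qed


lemma rowsum_gen:
  fixes A B :: "nat \<Rightarrow> nat \<Rightarrow> 'a \<Rightarrow> 'a"
  assumes adjAB: "\<And>i l x y. i \<in> I \<Longrightarrow> l \<in> I \<Longrightarrow> ip (A i l x) y = ip x (B i l y)"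
    and orth: "\<And>i l l' x. i \<in> I \<Longrightarrow> l \<in> I \<Longrightarrow> l' \<in> I \<Longrightarrow> l \<noteq> l' \<Longrightarrow> A i l (B i l' x) = 0"
    and pi: "\<And>i l x. i \<in> I \<Longrightarrow> l \<in> I \<Longrightarrow> B i l (A i l (B i l x)) = B i l x"
    and col: "\<And>l x. l \<in> I \<Longrightarrow> (\<Sum>i\<in>I. B i l (A i l x)) = x"
    and iI: "i0 \<in> I"
  shows "(\<Sum>l\<in>I. B i0 l (A i0 l x)) = x"
proof -
  define R where "R i x = (\<Sum>l\<in>I. B i l (A i l x))" for i x
  have adjBA: "ip (B i l u) v = ip u (A i l v)" if "i \<in> I" "l \<in> I" for i l u v
  proof -
    have "ip (B i l u) v = cnj (ip v (B i l u))" by (rule ipcnj)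
    also have "\<dots> = cnj (ip (A i l v) u)" by (simp add: adjAB[OF that])
    also have "\<dots> = ip u (A i l v)" using ipcnj[of u "A i l v"] by simp
    finally show ?thesis .
  qed
  have Asum: "A i l (sum f F) = (\<Sum>a\<in>F. A i l (f a))" if "i \<in> I" "l \<in> I" for i l f F
    by (rule adj_sum1[where B="B i l"]) (use adjAB that in simp)
  have Bsum: "B i l (sum f F) = (\<Sum>a\<in>F. B i l (f a))" if "i \<in> I" "l \<in> I" for i l f F
    by (rule adj_sum1[where B="A i l"]) (use adjBA that in simp)
  have Adiff: "A i l (u - v) = A i l u - A i l v" if "i \<in> I" "l \<in> I" for i l u v
    by (rule adj_diff1[where B="B i l"]) (use adjAB that in simp)
  have Bdiff: "B i l (u - v) = B i l u - B i l v" if "i \<in> I" "l \<in> I" for i l u v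
    by (rule adj_diff1[where B="A i l"]) (use adjBA that in simp)
  have Rsa: "ip (R i u) v = ip u (R i v)" if "i \<in> I" for i u v
  proof -
    have "ip (R i u) v = (\<Sum>l\<in>I. ip (B i l (A i l u)) v)" unfolding R_def by (rule ipsum1)
    also have "\<dots> = (\<Sum>l\<in>I. ip u (B i l (A i l v)))"
      by (rule sum.cong) (use adjAB adjBA that in auto)
    also have "\<dots> = ip u (R i v)" unfolding R_def by (rule ipsum2[symmetric])
    finally show ?thesis .
  qed
  have Rdiff: "R i (u - v) = R i u - R i v" if "i \<in> I" for i u v
    unfolding R_def using that by (simp add: Adiff Bdiff sum_subtractf)
  have Ridem: "R i (R i u) = R i u" if "i \<in> I" for i u
  proof -
    have "R i (R i u) = (\<Sum>l\<in>I. B i l (\<Sum>l'\<in>I. A i l (B i l' (A i l' u))))"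
      unfolding R_def using that by (simp add: Asum)
    also have "\<dots> = (\<Sum>l\<in>I. B i l (A i l (B i l (A i l u))))"
    proof (rule sum.cong)
      fix l assume l: "l \<in> I"
      have "(\<Sum>l'\<in>I. A i l (B i l' (A i l' u))) = A i l (B i l (A i l u))"
        by (rule sum_single) (use finI l orth that in auto)
      then show "B i l (\<Sum>l'\<in>I. A i l (B i l' (A i l' u))) = B i l (A i l (B i l (A i l u)))" by simp
    qed simp
    also have "\<dots> = R i u" unfolding R_def by (rule sum.cong) (use pi that in auto)
    finally show ?thesis .
  qed
  have Eq: "ip (u - R i u) (u - R i u) = ip (u - R i u) u" if "i \<in> I" for i u
  proof -
    have "ip (u - R i u) (R i u) = ip (R i (u - R i u)) u" using Rsa[OF that] by simp
    also have "\<dots> = 0" using Rdiff[OF that] Ridem[OF that] by (simp add: ipzero1)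
    finally show ?thesis by (simp add: ipdiff2)
  qed
  have S0: "(\<Sum>i\<in>I. (x - R i x)) = 0"
  proof -
    have "(\<Sum>i\<in>I. R i x) = (\<Sum>l\<in>I. \<Sum>i\<in>I. B i l (A i l x))" unfolding R_def by (rule sum.swap)
    also have "\<dots> = (\<Sum>l\<in>I. x)" by (rule sum.cong) (use col in auto)
    finally show ?thesis by (simp add: sum_subtractf)
  qed
  have "(\<Sum>i\<in>I. ip (x - R i x) (x - R i x)) = (\<Sum>i\<in>I. ip (x - R i x) x)"
    by (rule sum.cong) (use Eq in auto)
  also have "\<dots> = 0" using S0 by (simp add: ipsum1[symmetric] ipzero1)
  finally have "Re (\<Sum>i\<in>I. ip (x - R i x) (x - R i x)) = 0" by simp
  then have "(\<Sum>i\<in>I. Re (ip (x - R i x) (x - R i x))) = 0" by simp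
  then have "\<forall>i\<in>I. Re (ip (x - R i x) (x - R i x)) = 0"
    using sum_nonneg_eq_0_iff[OF finI, of "\<lambda>i. Re (ip (x - R i x) (x - R i x))"] ipre by simp
  then have "Re (ip (x - R i0 x) (x - R i0 x)) = 0" using iI by blast
  then have "ip (x - R i0 x) (x - R i0 x) = 0" using ipim by (simp add: complex_eq_iff)
  then have "x - R i0 x = 0" by (rule ipz)
  then show ?thesis unfolding R_def by simp
qed

lemma rowQ: "i \<in> I \<Longrightarrow> (\<Sum>l\<in>I. S i l (U i l x)) = x"
  by (rule rowsum_gen[where A=U and B=S])
     (use adj row3a SP R3 in auto)

lemma rowP: "i \<in> I \<Longrightarrow> (\<Sum>l\<in>I. U i l (S i l x)) = x"
  by (rule rowsum_gen[where A=S and B=U])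
     (use Sadj row3b UQ R2 in auto)

lemma normal: assumes "i \<in> I" "k \<in> I" shows "U i k (S i k y) = S i k (U i k y)"
proof -
  have QP: "S i k (U i k x) = S i k (U i k (U i k (S i k x)))" for x
  proof -
    have "S i k (U i k x) = S i k (U i k (\<Sum>l\<in>I. U i l (S i l x)))" using rowP assms by simp
    also have "\<dots> = S i k (\<Sum>l\<in>I. U i k (U i l (S i l x)))" by (simp add: U_sum[OF assms])
    also have "(\<Sum>l\<in>I. U i k (U i l (S i l x))) = U i k (U i k (S i k x))"
      by (rule sum_single) (use finI assms row4 in auto)
    finally show ?thesis .
  qed
  have PQ: "U i k (S i k x) = U i k (S i k (S i k (U i k x)))" for x
  proof -
    have "U i k (S i k x) = U i k (S i k (\<Sum>l\<in>I. S i l (U i l x)))" using rowQ assms by simp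
    also have "\<dots> = U i k (\<Sum>l\<in>I. S i k (S i l (U i l x)))" by (simp add: S_sum[OF assms])
    also have "(\<Sum>l\<in>I. S i k (S i l (U i l x))) = S i k (S i k (U i k x))"
      by (rule sum_single) (use finI assms row4s in auto)
    finally show ?thesis .
  qed
  have Psa: "ip (U i k (S i k u)) v = ip u (U i k (S i k v))" for u v
    using adj[OF assms] Sadj[OF assms] by simp
  have Qsa: "ip (S i k (U i k u)) v = ip u (S i k (U i k v))" for u v
    using adj[OF assms] Sadj[OF assms] by simp
  show ?thesis
  proof (rule ext2)
    fix x
    have "ip x (U i k (S i k y)) = ip x (U i k (S i k (S i k (U i k y))))" using PQ by metis
    also have "\<dots> = ip (U i k (S i k x)) (S i k (U i k y))" by (rule Psa[symmetric])
    also have "\<dots> = ip (S i k (U i k (U i k (S i k x)))) y" by (rule Qsa[symmetric])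
    also have "\<dots> = ip (S i k (U i k x)) y" using QP by metis
    also have "\<dots> = ip x (S i k (U i k y))" by (rule Qsa)
    finally show "ip x (U i k (S i k y)) = ip x (S i k (U i k y))" .
  qed
qed

end

theorem proposition3p14:
  fixes sc :: "complex \<Rightarrow> 'a::ab_group_add \<Rightarrow> 'a"
    and ip :: "'a \<Rightarrow> 'a \<Rightarrow> complex"
    and n :: nat
    and \<theta> :: "nat \<Rightarrow> nat \<Rightarrow> real"
    and U Ustar :: "nat \<Rightarrow> nat \<Rightarrow> 'a \<Rightarrow> 'a"
  defines "\<omega> \<equiv> (\<lambda>i j. cis (2 * pi * \<theta> i j))"
  assumes H: "hilbert_space sc ip"
    and n2: "n \<ge> 2"
    and skew: "\<forall>i\<in>{1..n}. \<forall>j\<in>{1..n}. \<theta> j i = - \<theta> i j"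
    and bdd: "\<forall>i\<in>{1..n}. \<forall>k\<in>{1..n}. bounded_op sc ip (U i k)"
    and adj: "\<forall>i\<in>{1..n}. \<forall>k\<in>{1..n}. is_adjoint ip (U i k) (Ustar i k)"
    and R1: "\<forall>i\<in>{1..n}. \<forall>j\<in>{1..n}. \<forall>k\<in>{1..n}. \<forall>l\<in>{1..n}.
      (\<lambda>x. U i k (U j l x) + sc (\<omega> j i) (U j k (U i l x))) =
      (\<lambda>x. sc (\<omega> k l) (U i l (U j k x)) + sc (\<omega> j i * \<omega> k l) (U j l (U i k x)))"
    and R2: "\<forall>k\<in>{1..n}. \<forall>l\<in>{1..n}.
      (\<lambda>x. \<Sum>i\<in>{1..n}. U i k (Ustar i l x)) = (\<lambda>x. if k = l then x else 0)"
    and R3: "\<forall>k\<in>{1..n}. \<forall>l\<in>{1..n}.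
      (\<lambda>x. \<Sum>i\<in>{1..n}. Ustar i l (U i k x)) = (\<lambda>x. if k = l then x else 0)"
    and R4: "\<forall>i\<in>{1..n}. \<forall>j\<in>{1..n}. \<forall>k\<in>{1..n}. i \<noteq> j \<longrightarrow>
      (\<lambda>x. U j k (Ustar i k x)) = (\<lambda>x. 0)"
    and R5: "\<forall>i\<in>{1..n}. \<forall>j\<in>{1..n}. \<forall>k\<in>{1..n}. i \<noteq> j \<longrightarrow>
      (\<lambda>x. Ustar i k (U j k x)) = (\<lambda>x. 0)"
  shows "\<forall>i\<in>{1..n}. \<forall>k\<in>{1..n}. U i k \<circ> Ustar i k = Ustar i k \<circ> U i k"
  proof -
  have hs0_0: "vector_space sc"
    using H unfolding hilbert_space_def by (elim conjE) assumption
  have hs0_1: "\<forall>x y z. ip (x + y) z = ip x z + ip y z"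
    using H unfolding hilbert_space_def by (elim conjE) assumption
  have hs0_2: "\<forall>c x y. ip (sc c x) y = c * ip x y"
    using H unfolding hilbert_space_def by (elim conjE) assumption
  have hs0_3: "\<forall>x y. ip y x = cnj (ip x y)"
    using H unfolding hilbert_space_def by (elim conjE) assumption
  have hs0_4: "\<forall>x. Im (ip x x) = 0 \<and> Re (ip x x) \<ge> 0"
    using H unfolding hilbert_space_def by (elim conjE) assumption
  have hs0_5: "\<forall>x. ip x x = 0 \<longrightarrow> x = 0"
    using H unfolding hilbert_space_def by (elim conjE) assumption
  have hs: "vector_space sc" "\<And>x y z. ip (x + y) z = ip x z + ip y z"
    "\<And>c x y. ip (sc c x) y = c * ip x y" "\<And>x y. ip y x = cnj (ip x y)"
    "\<And>x. Im (ip x x) = 0" "\<And>x. Re (ip x x) \<ge> 0" "\<And>x. ip x x = 0 \<Longrightarrow> x = 0"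
    using hs0_0 hs0_1 hs0_2 hs0_3 hs0_4 hs0_5 by (blast, blast, blast, blast, blast, blast, blast)
  interpret q: qs sc ip "{1..n}" U Ustar \<omega>
  proof (rule qs.intro)
    show "\<And>i k x y. i \<in> {1..n} \<Longrightarrow> k \<in> {1..n} \<Longrightarrow> ip (U i k x) y = ip x (Ustar i k y)"
      using adj unfolding is_adjoint_def by blast
    show "\<And>i. i \<in> {1..n} \<Longrightarrow> \<omega> i i = 1"
    proof -
      fix i assume "i \<in> {1..n}"
      then have "\<theta> i i = - \<theta> i i" using skew by blast
      then have "\<theta> i i = 0" by simp
      then show "\<omega> i i = 1" unfolding \<omega>_def by simp
    qed
    show "\<And>i k l x. i \<in> {1..n} \<Longrightarrow> k \<in> {1..n} \<Longrightarrow> l \<in> {1..n} \<Longrightarrow>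
      U i k (U i l x) + sc (\<omega> i i) (U i k (U i l x)) =
      sc (\<omega> k l) (U i l (U i k x)) + sc (\<omega> i i * \<omega> k l) (U i l (U i k x))"
    proof -
      fix i k l x assume a: "i \<in> {1..n}" "k \<in> {1..n}" "l \<in> {1..n}"
      show "U i k (U i l x) + sc (\<omega> i i) (U i k (U i l x)) =
      sc (\<omega> k l) (U i l (U i k x)) + sc (\<omega> i i * \<omega> k l) (U i l (U i k x))"
        using fun_cong[OF R1[rule_format, OF a(1) a(1) a(2) a(3)], of x] by simp
    qed
    show "\<And>k l x. k \<in> {1..n} \<Longrightarrow> l \<in> {1..n} \<Longrightarrow>
      (\<Sum>i\<in>{1..n}. U i k (Ustar i l x)) = (if k = l then x else 0)"
    proof -
      fix k l x assume a: "k \<in> {1..n}" "l \<in> {1..n}"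
      show "(\<Sum>i\<in>{1..n}. U i k (Ustar i l x)) = (if k = l then x else 0)" using fun_cong[OF R2[rule_format, OF a], of x] by simp
    qed
    show "\<And>k l x. k \<in> {1..n} \<Longrightarrow> l \<in> {1..n} \<Longrightarrow>
      (\<Sum>i\<in>{1..n}. Ustar i l (U i k x)) = (if k = l then x else 0)"
    proof -
      fix k l x assume a: "k \<in> {1..n}" "l \<in> {1..n}"
      show "(\<Sum>i\<in>{1..n}. Ustar i l (U i k x)) = (if k = l then x else 0)" using fun_cong[OF R3[rule_format, OF a], of x] by simp
    qed
    show "\<And>i j k x. i \<in> {1..n} \<Longrightarrow> j \<in> {1..n} \<Longrightarrow> k \<in> {1..n} \<Longrightarrow> i \<noteq> j \<Longrightarrow> U j k (Ustar i k x) = 0"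
    proof -
      fix i j k x assume a: "i \<in> {1..n}" "j \<in> {1..n}" "k \<in> {1..n}" "i \<noteq> j"
      show "U j k (Ustar i k x) = 0" using fun_cong[OF R4[rule_format, OF a], of x] by simp
    qed
    show "\<And>i j k x. i \<in> {1..n} \<Longrightarrow> j \<in> {1..n} \<Longrightarrow> k \<in> {1..n} \<Longrightarrow> i \<noteq> j \<Longrightarrow> Ustar i k (U j k x) = 0"
    proof -
      fix i j k x assume a: "i \<in> {1..n}" "j \<in> {1..n}" "k \<in> {1..n}" "i \<noteq> j"
      show "Ustar i k (U j k x) = 0" using fun_cong[OF R5[rule_format, OF a], of x] by simp
    qed
  qed (fact hs finite_atLeastAtMost)+
  show ?thesis using q.normal by auto
qed

end
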